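(* Let $\Omega\subset\mathbb{R}^N$ be a nonempty open bounded connected set, $X=\overline{\Omega}$, $Y\subset\mathbb{R}^N$, $\mu\in\mathcal{P}(X)$, $\nu\in\mathcal{P}(Y)$, $H,K:X\to(0,+\infty)$ in $L^1(X,\mu)$, $\mathcal{A}$ a family of balls covering $X$, and $u\in\mathrm{Refo}(\mu;\nu)^{H,K}$. If $u$ is differentiable at $x_0\in\Omega$, then $Ju(x_0)=\det\nabla u(x_0)\neq0$.
   Context: For $u:X\to Y$, $x_0\in X$: $e_u(x_0)=\limsup_{x\to x_0,\,x\ne x_0}\frac{|u(x)-u(x_0)|}{|x-x_0|}$, $c_u(x_0)=\limsup_{x\to x_0,\,x\ne x_0}\frac{|x-x_0|}{|u(x)-u(x_0)|}$ (quotient $+\infty$ if $u(x)=u(x_0)$). $\mathrm{Refo}(\mu;\nu)^{H,K}$ is the set of maps $u:X\to Y$ with $u_\#\mu=\nu$ (i.e. $\mu(u^{-1}(A))=\nu(A)$ for Borel $A$) such that for every $x\in X$ there is $B(x,r)\in\mathcal{A}$ with $c_u(y)\le H(x)$, $e_u(y)\le K(x)$ for all $y\in\overline{B}(x,r)\cap\Omega$. *)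

theory Defs
  imports "HOL-Analysis.Analysis" "HOL-Probability.Probability"
begin

definition expan :: "'a::metric_space set \<Rightarrow> ('a \<Rightarrow> 'b::metric_space) \<Rightarrow> 'a \<Rightarrow> ereal" where
  "expan D u x0 = Limsup (at x0 within D) (\<lambda>x. ereal (dist (u x) (u x0) / dist x x0))"

definition contr :: "'a::metric_space set \<Rightarrow> ('a \<Rightarrow> 'b::metric_space) \<Rightarrow> 'a \<Rightarrow> ereal" where
  "contr D u x0 = Limsup (at x0 within D)
     (\<lambda>x. if u x = u x0 then \<infinity> else ereal (dist x x0 / dist (u x) (u x0)))"

definition Refo ::
  "'a::euclidean_space set \<Rightarrow> 'a measure \<Rightarrow> 'b::euclidean_space measure \<Rightarrow> ('a \<Rightarrow> real) \<Rightarrow> ('a \<Rightarrow> real)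
   \<Rightarrow> 'a set set \<Rightarrow> ('a \<Rightarrow> 'b) set" where
  "Refo \<Omega> \<mu> \<nu> H K \<A> = {u. u \<in> measurable \<mu> \<nu> \<and> distr \<mu> \<nu> u = \<nu> \<and>
     (\<forall>x\<in>closure \<Omega>. \<exists>r>0. ball x r \<in> \<A> \<and>
        (\<forall>y\<in>cball x r \<inter> \<Omega>. contr (closure \<Omega>) u y \<le> ereal (H x) \<and>
                             expan (closure \<Omega>) u y \<le> ereal (K x)))}"

end

theory Submission
  imports Defs
begin

theorem lemma2p10:
  fixes \<Omega> Y :: "(real^'n) set"
    and \<mu> \<nu> :: "(real^'n) measure"
    and H K :: "real^'n \<Rightarrow> real"
    and \<A> :: "(real^'n) set set"
    and u :: "real^'n \<Rightarrow> real^'n"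
    and x0 :: "real^'n"
  assumes "open \<Omega>" and "bounded \<Omega>" and "connected \<Omega>" and "\<Omega> \<noteq> {}"
    and "prob_space \<mu>" and "sets \<mu> = sets (restrict_space borel (closure \<Omega>))"
    and "prob_space \<nu>" and "sets \<nu> = sets (restrict_space borel Y)"
    and "\<forall>x\<in>closure \<Omega>. H x > 0" and "\<forall>x\<in>closure \<Omega>. K x > 0"
    and "integrable \<mu> H" and "integrable \<mu> K"
    and "\<forall>B\<in>\<A>. \<exists>c r. r > 0 \<and> B = ball c r"
    and "closure \<Omega> \<subseteq> \<Union>\<A>"
    and "u \<in> Refo \<Omega> \<mu> \<nu> H K \<A>"
    and "x0 \<in> \<Omega>" and "u differentiable (at x0)"
  shows "det (matrix (frechet_derivative u (at x0))) \<noteq> 0"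
proof
  assume det0: "det (matrix (frechet_derivative u (at x0))) = 0"
  define L where "L = frechet_derivative u (at x0)"
  have der: "(u has_derivative L) (at x0)"
    using assms(17) L_def frechet_derivative_works by blast
  have lin: "linear L" using der has_derivative_linear by blast
  have "\<not> inj L" using det0 det_nz_iff_inj[OF lin] L_def by simp
  then obtain w where w: "w \<noteq> 0" "L w = 0"
    using lin linear_injective_0 by blast
  define v where "v = w /\<^sub>R norm w"
  have nv: "norm v = 1" using w by (simp add: v_def)
  have Lv: "L v = 0" using w lin by (simp add: v_def linear_scale)
  have x0c: "x0 \<in> closure \<Omega>" using assms(16) closure_subset by blast
  obtain r where "r > 0" and rr: "\<forall>y\<in>cball x0 r \<inter> \<Omega>. contr (closure \<Omega>) u y \<le> ereal (H x0)"
    using assms(15) x0c unfolding Refo_def by blast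
  hence c: "contr (closure \<Omega>) u x0 \<le> ereal (H x0)" using assms(16) \<open>r>0\<close> by simp
  define M where "M = H x0 + 1"
  have Mpos: "M > 0" using assms(9) x0c M_def by force
  have "ereal (H x0) < ereal M" using M_def by simp
  hence "contr (closure \<Omega>) u x0 < ereal M" using c by (meson order_le_less_trans)
  hence "eventually (\<lambda>x. (if u x = u x0 then \<infinity> else ereal (dist x x0 / dist (u x) (u x0))) < ereal M)
      (at x0 within closure \<Omega>)"
    unfolding contr_def by (rule Limsup_lessD)
  then obtain d where d: "d > 0" and dd: "\<forall>x\<in>closure \<Omega>. x \<noteq> x0 \<and> dist x x0 < d \<longrightarrow>
      (if u x = u x0 then \<infinity> else ereal (dist x x0 / dist (u x) (u x0))) < ereal M"
    unfolding eventually_at by blast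
  obtain d2 where d2: "d2 > 0" and dd2: "\<forall>y. norm (y - x0) < d2 \<longrightarrow>
      norm (u y - u x0 - L (y - x0)) \<le> (1/(2*M)) * norm (y - x0)"
    using der unfolding has_derivative_at_alt using Mpos
    by (metis divide_pos_pos mult_pos_pos zero_less_numeral zero_less_one)
  obtain d3 where d3: "d3 > 0" "ball x0 d3 \<subseteq> \<Omega>"
    using assms(1,16) open_contains_ball by blast
  define t where "t = min d (min d2 d3) / 2"
  have tpos: "t > 0" using d d2 d3 by (simp add: t_def)
  have td: "t < d" "t < d2" "t < d3" using d d2 d3 by (auto simp: t_def)
  define y where "y = x0 + t *\<^sub>R v"
  have ny: "norm (y - x0) = t" using nv tpos by (simp add: y_def)
  have "y \<in> ball x0 d3" using ny td by (simp add: dist_norm norm_minus_commute)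
  hence yO: "y \<in> closure \<Omega>" using d3 closure_subset by blast
  have yne: "y \<noteq> x0" using ny tpos by auto
  have "dist y x0 < d" using ny td by (simp add: dist_norm)
  hence q: "(if u y = u x0 then \<infinity> else ereal (dist y x0 / dist (u y) (u x0))) < ereal M"
    using dd yO yne by blast
  hence uy: "u y \<noteq> u x0" by (auto split: if_splits)
  with q have "dist y x0 / dist (u y) (u x0) < M" by simp
  hence t1: "t < M * norm (u y - u x0)"
    using uy ny by (simp add: dist_norm divide_less_eq)
  have "L (y - x0) = 0" using Lv lin by (simp add: y_def linear_scale)
  hence "norm (u y - u x0) \<le> (1/(2*M)) * t"
    using dd2[rule_format, of y] ny td by simp
  hence "M * norm (u y - u x0) \<le> M * ((1/(2*M)) * t)"
    using Mpos by (intro mult_left_mono) auto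
  also have "\<dots> = t/2" using Mpos by simp
  finally show False using t1 tpos by simp
qed

end
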